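(* Assume $U_1>2U_2$, $0<\varepsilon\ll U_2$ and $U_2/\varepsilon\notin\mathbb N$. Let $(\bar\eta,\eta)$ be a move with $\bar\eta\in\mathcal B$. If $\Delta s:=s(\eta)-s(\bar\eta)\ge3$, $p_{min}(\eta)\ge4$ and $p_2(\bar\eta)\ge\ell_2^*$, then either $\eta\in\mathcal B$, or $\eta\notin\mathcal B$ and $H(\bar\eta)>\Gamma$.
   Context: Let $L\in\mathbb N$, $\Lambda=\{0,\dots,L\}^2$, $\partial^-\Lambda=\{x\in\Lambda:\exists y\notin\Lambda,\ |y-x|=1\}$, $\Lambda_0=\Lambda\setminus\partial^-\Lambda$, configurations $\eta\in\{0,1\}^\Lambda$ with energy $H(\eta)=-U_1\sum_{(x,y)\in\Lambda^*_{0,h}}\eta(x)\eta(y)-U_2\sum_{(x,y)\in\Lambda^*_{0,v}}\eta(x)\eta(y)+\Delta\sum_{x\in\Lambda}\eta(x)$, with $\Lambda^*_{0,h}$ ($\Lambda^*_{0,v}$) the horizontal (vertical) unoriented nearest-neighbour bonds inside $\Lambda_0$, $U_1,U_2,\Delta>0$. $\varepsilon=U_1+U_2-\Delta$, $\ell_2^*=\lceil U_2/\varepsilon\rceil$, $s^*=3\ell_2^*-1$, $\Gamma=U_1\ell_2^*+2U_2\ell_2^*+U_1-U_2-2\varepsilon(\ell_2^* )^2+3\varepsilon\ell_2^*-2\varepsilon$. A move is a pair $(\bar\eta,\eta)$ with $\eta\ne\bar\eta$ obtained from $\bar\eta$ by exchanging the values at two nearest-neighbour sites of $\Lambda$, or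 by setting the value at some site of $\partial^-\Lambda$ to $0$, or setting it to $1$. Geometry: a free particle is an occupied site in $\partial^-\Lambda$ or an occupied site of $\Lambda_0$ with no occupied nearest neighbour in $\Lambda_0$; $n(\eta)$ is the number of free particles; $\eta_{cl}$ is the set of occupied sites of $\Lambda_0$ that are not free. $C(\eta_{cl})$ is the union of closed unit squares centred at sites of $\eta_{cl}$; $p_1$ ($p_2$) is the number of columns (rows) of $\mathbb Z^2$ meeting $C(\eta_{cl})$; $s=p_1+p_2$; $v=p_1p_2-|\eta_{cl}|$; $p_{min}=\min\{p_1,p_2\}$, $p_{max}=\max\{p_1,p_2\}$. $\mathcal B$ is the set of $\eta$ such that: $s(\eta)\le s^*-2$; or $s(\eta)\ge s^*-1$ and $p_2(\eta)\le\ell_2^*-1$; or $s(\eta)=s^*-1$, $p_2(\eta)\ge\ell_2^*$ and $v(\eta)\ge p_{min}(\eta)-1$; or $s(\eta)\ge s^*$, $p_2(\eta)=\ell_2^*$ and $v(\eta)\ge p_{max}(\eta)-1$. *)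

theory Defs
  imports Complex_Main
begin

type_synonym site = "int \<times> int"

text \<open>Lambda = {0,...,L}^2; configurations are represented by their set of occupied sites
(a subset of Lambda).\<close>
definition Lam :: "nat \<Rightarrow> site set" where
  "Lam L = {0..int L} \<times> {0..int L}"

definition nn :: "site \<Rightarrow> site \<Rightarrow> bool" where
  "nn x y \<longleftrightarrow> \<bar>fst x - fst y\<bar> + \<bar>snd x - snd y\<bar> = 1"

definition bdry :: "nat \<Rightarrow> site set" where
  "bdry L = {x \<in> Lam L. \<exists>y. nn x y \<and> y \<notin> Lam L}"

definition Lam0 :: "nat \<Rightarrow> site set" where
  "Lam0 L = Lam L - bdry L"

definition config :: "nat \<Rightarrow> site set \<Rightarrow> bool" where
  "config L \<eta> \<longleftrightarrow> \<eta> \<subseteq> Lam L"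

definition hbonds :: "nat \<Rightarrow> site set \<Rightarrow> nat" where
  "hbonds L \<eta> = card {x. x \<in> Lam0 L \<and> (fst x + 1, snd x) \<in> Lam0 L \<and> x \<in> \<eta> \<and> (fst x + 1, snd x) \<in> \<eta>}"

definition vbonds :: "nat \<Rightarrow> site set \<Rightarrow> nat" where
  "vbonds L \<eta> = card {x. x \<in> Lam0 L \<and> (fst x, snd x + 1) \<in> Lam0 L \<and> x \<in> \<eta> \<and> (fst x, snd x + 1) \<in> \<eta>}"

definition H :: "nat \<Rightarrow> real \<Rightarrow> real \<Rightarrow> real \<Rightarrow> site set \<Rightarrow> real" where
  "H L U1 U2 \<Delta> \<eta> = - U1 * real (hbonds L \<eta>) - U2 * real (vbonds L \<eta>) + \<Delta> * real (card \<eta>)"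

definition swap_sites :: "site \<Rightarrow> site \<Rightarrow> site set \<Rightarrow> site set" where
  "swap_sites x y \<eta> = {z. (z = x \<and> y \<in> \<eta>) \<or> (z = y \<and> x \<in> \<eta>) \<or> (z \<noteq> x \<and> z \<noteq> y \<and> z \<in> \<eta>)}"

definition move :: "nat \<Rightarrow> site set \<Rightarrow> site set \<Rightarrow> bool" where
  "move L \<eta>b \<eta> \<longleftrightarrow> config L \<eta>b \<and> \<eta> \<noteq> \<eta>b \<and>
     ((\<exists>x y. x \<in> Lam L \<and> y \<in> Lam L \<and> nn x y \<and> \<eta> = swap_sites x y \<eta>b)
      \<or> (\<exists>x \<in> bdry L. \<eta> = \<eta>b - {x})
      \<or> (\<exists>x \<in> bdry L. \<eta> = insert x \<eta>b))"

definition eta_cl :: "nat \<Rightarrow> site set \<Rightarrow> site set" where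
  "eta_cl L \<eta> = {x \<in> \<eta> \<inter> Lam0 L. \<exists>y. nn x y \<and> y \<in> \<eta> \<inter> Lam0 L}"

text \<open>A column {k} x Z meets the union of closed unit squares centred at the sites of
eta_cl iff k is the first coordinate of such a site; similarly for rows.\<close>
definition p1 :: "nat \<Rightarrow> site set \<Rightarrow> nat" where
  "p1 L \<eta> = card (fst ` eta_cl L \<eta>)"

definition p2 :: "nat \<Rightarrow> site set \<Rightarrow> nat" where
  "p2 L \<eta> = card (snd ` eta_cl L \<eta>)"

definition s_of :: "nat \<Rightarrow> site set \<Rightarrow> nat" where
  "s_of L \<eta> = p1 L \<eta> + p2 L \<eta>"

definition v_of :: "nat \<Rightarrow> site set \<Rightarrow> int" where
  "v_of L \<eta> = int (p1 L \<eta>) * int (p2 L \<eta>) - int (card (eta_cl L \<eta>))"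

definition pmin :: "nat \<Rightarrow> site set \<Rightarrow> nat" where
  "pmin L \<eta> = min (p1 L \<eta>) (p2 L \<eta>)"

definition pmax :: "nat \<Rightarrow> site set \<Rightarrow> nat" where
  "pmax L \<eta> = max (p1 L \<eta>) (p2 L \<eta>)"

definition eps :: "real \<Rightarrow> real \<Rightarrow> real \<Rightarrow> real" where
  "eps U1 U2 \<Delta> = U1 + U2 - \<Delta>"

definition ell2 :: "real \<Rightarrow> real \<Rightarrow> real \<Rightarrow> int" where
  "ell2 U1 U2 \<Delta> = \<lceil>U2 / eps U1 U2 \<Delta>\<rceil>"

definition sstar :: "real \<Rightarrow> real \<Rightarrow> real \<Rightarrow> int" where
  "sstar U1 U2 \<Delta> = 3 * ell2 U1 U2 \<Delta> - 1"

definition Gamma :: "real \<Rightarrow> real \<Rightarrow> real \<Rightarrow> real" where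
  "Gamma U1 U2 \<Delta> = (let e = eps U1 U2 \<Delta>; l = real_of_int (ell2 U1 U2 \<Delta>) in
     U1 * l + 2 * U2 * l + U1 - U2 - 2 * e * l\<^sup>2 + 3 * e * l - 2 * e)"

definition inB :: "nat \<Rightarrow> real \<Rightarrow> real \<Rightarrow> real \<Rightarrow> site set \<Rightarrow> bool" where
  "inB L U1 U2 \<Delta> \<eta> \<longleftrightarrow>
     (let s = int (s_of L \<eta>); ss = sstar U1 U2 \<Delta>; l = ell2 U1 U2 \<Delta>; q2 = int (p2 L \<eta>);
          v = v_of L \<eta> in
      s \<le> ss - 2
      \<or> (s \<ge> ss - 1 \<and> q2 \<le> l - 1)
      \<or> (s = ss - 1 \<and> q2 \<ge> l \<and> v \<ge> int (pmin L \<eta>) - 1)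
      \<or> (s \<ge> ss \<and> q2 = l \<and> v \<ge> int (pmax L \<eta>) - 1))"

end

theory Submission
  imports Defs
begin


lemma finite_Lam: "finite (Lam L)"
  unfolding Lam_def by simp

lemma cl_sub: "eta_cl L S \<subseteq> Lam L"
  unfolding eta_cl_def Lam0_def by auto

lemma finite_cl: "finite (eta_cl L S)"
  using finite_subset[OF cl_sub finite_Lam] .

lemma cl_mem: "x \<in> eta_cl L S \<longleftrightarrow> x \<in> S \<and> x \<in> Lam0 L \<and> (\<exists>y. nn x y \<and> y \<in> S \<and> y \<in> Lam0 L)"
  unfolding eta_cl_def by auto

lemma hb_bound: "hbonds L S + p2 L S \<le> card (eta_cl L S)"
proof -
  define C where "C = eta_cl L S"
  define Bh where "Bh = {x. x \<in> Lam0 L \<and> (fst x + 1, snd x) \<in> Lam0 L \<and> x \<in> S \<and> (fst x + 1, snd x) \<in> S}"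
  have fC: "finite C" unfolding C_def by (rule finite_cl)
  have BC: "Bh \<subseteq> C"
  proof
    fix x assume "x \<in> Bh"
    moreover have "nn x (fst x + 1, snd x)" by (simp add: nn_def)
    ultimately show "x \<in> C" unfolding C_def Bh_def cl_mem by blast
  qed
  define f where "f r = (Max (fst ` {z\<in>C. snd z = r}), r)" for r
  have fin: "f r \<in> C - Bh" if "r \<in> snd ` C" for r
  proof -
    let ?M = "fst ` {z\<in>C. snd z = r}"
    have fM: "finite ?M" using fC by simp
    have nM: "?M \<noteq> {}" using that by force
    have "Max ?M \<in> ?M" using Max_in[OF fM nM] .
    then obtain z where z: "z \<in> C" "snd z = r" "fst z = Max ?M" by auto
    have zf: "z = f r" using z unfolding f_def by (cases z) auto
    have "z \<notin> Bh"
    proof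
      assume "z \<in> Bh"
      moreover have "nn (fst z + 1, snd z) z" by (simp add: nn_def)
      ultimately have "(fst z + 1, snd z) \<in> C"
        unfolding Bh_def C_def cl_mem by blast
      hence "fst z + 1 \<in> ?M" using z by force
      hence "fst z + 1 \<le> Max ?M" using fM by simp
      thus False using z by simp
    qed
    thus ?thesis using z zf by auto
  qed
  have "inj_on f (snd ` C)" unfolding inj_on_def f_def by auto
  hence "card (snd ` C) \<le> card (C - Bh)"
    using card_inj_on_le[of f "snd ` C" "C - Bh"] fin fC by auto
  also have "\<dots> = card C - card Bh" using card_Diff_subset[OF finite_subset[OF BC fC] BC] .
  finally have "card (snd ` C) + card Bh \<le> card C"
    using card_mono[OF fC BC] by linarith
  thus ?thesis unfolding hbonds_def p2_def C_def Bh_def by simp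
qed

lemma vb_bound: "vbonds L S + p1 L S \<le> card (eta_cl L S)"
proof -
  define C where "C = eta_cl L S"
  define Bh where "Bh = {x. x \<in> Lam0 L \<and> (fst x, snd x + 1) \<in> Lam0 L \<and> x \<in> S \<and> (fst x, snd x + 1) \<in> S}"
  have fC: "finite C" unfolding C_def by (rule finite_cl)
  have BC: "Bh \<subseteq> C"
  proof
    fix x assume "x \<in> Bh"
    moreover have "nn x (fst x, snd x + 1)" by (simp add: nn_def)
    ultimately show "x \<in> C" unfolding C_def Bh_def cl_mem by blast
  qed
  define f where "f r = (r, Max (snd ` {z\<in>C. fst z = r}))" for r
  have fin: "f r \<in> C - Bh" if "r \<in> fst ` C" for r
  proof -
    let ?M = "snd ` {z\<in>C. fst z = r}"
    have fM: "finite ?M" using fC by simp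
    have nM: "?M \<noteq> {}" using that by force
    have "Max ?M \<in> ?M" using Max_in[OF fM nM] .
    then obtain z where z: "z \<in> C" "fst z = r" "snd z = Max ?M" by auto
    have zf: "z = f r" using z unfolding f_def by (cases z) auto
    have "z \<notin> Bh"
    proof
      assume "z \<in> Bh"
      moreover have "nn (fst z, snd z + 1) z" by (simp add: nn_def)
      ultimately have "(fst z, snd z + 1) \<in> C"
        unfolding Bh_def C_def cl_mem by blast
      hence "snd z + 1 \<in> ?M" using z by force
      hence "snd z + 1 \<le> Max ?M" using fM by simp
      thus False using z by simp
    qed
    thus ?thesis using z zf by auto
  qed
  have "inj_on f (fst ` C)" unfolding inj_on_def f_def by auto
  hence "card (fst ` C) \<le> card (C - Bh)"
    using card_inj_on_le[of f "fst ` C" "C - Bh"] fin fC by auto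
  also have "\<dots> = card C - card Bh" using card_Diff_subset[OF finite_subset[OF BC fC] BC] .
  finally have "card (fst ` C) + card Bh \<le> card C"
    using card_mono[OF fC BC] by linarith
  thus ?thesis unfolding vbonds_def p1_def C_def Bh_def by simp
qed

lemma card_cl_le: "card (eta_cl L S) \<le> p1 L S * p2 L S"
proof -
  have "eta_cl L S \<subseteq> fst ` eta_cl L S \<times> snd ` eta_cl L S" by force
  hence "card (eta_cl L S) \<le> card (fst ` eta_cl L S \<times> snd ` eta_cl L S)"
    by (intro card_mono) (auto simp: finite_cl)
  thus ?thesis unfolding p1_def p2_def by (simp add: card_cartesian_product)
qed

lemma cl_subS: "eta_cl L S \<subseteq> S" unfolding eta_cl_def by auto

lemma energy:
  assumes "config L S" "U1 \<ge> 0" "U2 \<ge> 0"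
  shows "H L U1 U2 \<Delta> S = - U1 * real (hbonds L S) - U2 * real (vbonds L S) + \<Delta> * real (card S)"
  unfolding H_def by simp



lemma cl_mono: "A \<subseteq> B \<Longrightarrow> eta_cl L A \<subseteq> eta_cl L B"
  unfolding eta_cl_def by blast

lemma s_mono: assumes "A \<subseteq> B" shows "s_of L A \<le> s_of L B"
proof -
  have "card (fst ` eta_cl L A) \<le> card (fst ` eta_cl L B)"
    using cl_mono[OF assms] by (intro card_mono) (auto simp: finite_cl)
  moreover have "card (snd ` eta_cl L A) \<le> card (snd ` eta_cl L B)"
    using cl_mono[OF assms] by (intro card_mono) (auto simp: finite_cl)
  ultimately show ?thesis unfolding s_of_def p1_def p2_def by simp
qed

lemma card_aux:
  assumes "finite P" "finite Q" "p \<in> P \<or> r \<in> Q" "q = p \<or> t = r"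
  shows "card (insert p (insert q P)) + card (insert r (insert t Q)) \<le> card P + card Q + 2"
  using assms by (auto simp: card_insert_if)

lemma nn_share: "nn x y \<Longrightarrow> fst x = fst y \<or> snd x = snd y"
  unfolding nn_def by arith

lemma nn_ne: "nn x y \<Longrightarrow> x \<noteq> y"
  unfolding nn_def by auto

lemma swap_case:
  assumes fin: "finite A" and xA: "x \<in> A" and yA: "y \<notin> A" and nxy: "nn x y"
    and small: "card A < card (eta_cl L A) + 2" and eq: "E = insert y (A - {x})"
  shows "s_of L E \<le> s_of L A + 2"
proof -
  define C where "C = eta_cl L A"
  define C' where "C' = eta_cl L E"
  define Fr where "Fr = A - C"
  have CA: "C \<subseteq> A" unfolding C_def by (rule cl_subS)
  have fC: "finite C" unfolding C_def by (rule finite_cl)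
  have cardA: "card A = card C + card Fr"
    unfolding Fr_def using card_Diff_subset[OF fC CA] card_mono[OF fin CA] by simp
  have Fr1: "card Fr \<le> 1" using small cardA unfolding C_def by simp
  have fFr: "finite Fr" unfolding Fr_def using fin by simp
  have uniq: "a = b" if "a \<in> Fr" "b \<in> Fr" for a b
  proof (rule ccontr)
    assume "a \<noteq> b"
    hence "card {a,b} = 2" by simp
    moreover have "card {a,b} \<le> card Fr" using that fFr by (intro card_mono) auto
    ultimately show False using Fr1 by simp
  qed
  have incl: "C' \<subseteq> C \<union> {y} \<union> {z \<in> Fr. nn z y \<and> z \<noteq> x}"
  proof
    fix z assume zC': "z \<in> C'"
    show "z \<in> C \<union> {y} \<union> {z \<in> Fr. nn z y \<and> z \<noteq> x}"
    proof (cases "z = y")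
      case True thus ?thesis by simp
    next
      case False
      from zC' obtain u where u: "z \<in> E" "z \<in> Lam0 L" "nn z u" "u \<in> E" "u \<in> Lam0 L"
        unfolding C'_def cl_mem by blast
      have zA: "z \<in> A" "z \<noteq> x" using u(1) False eq by auto
      show ?thesis
      proof (cases "u = y")
        case False
        hence "u \<in> A" using u(4) eq by auto
        hence "z \<in> C" unfolding C_def cl_mem using zA u by blast
        thus ?thesis by simp
      next
        case True
        thus ?thesis using zA u(3) unfolding Fr_def by auto
      qed
    qed
  qed
  show ?thesis
  proof (cases "x \<in> C")
    case False
    hence "x \<in> Fr" unfolding Fr_def using xA by simp
    hence "C' \<subseteq> insert y C" using incl uniq by blast
    hence "fst ` C' \<subseteq> insert (fst y) (fst ` C)" "snd ` C' \<subseteq> insert (snd y) (snd ` C)" by auto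
    hence "card (fst ` C') \<le> card (insert (fst y) (fst ` C))"
          "card (snd ` C') \<le> card (insert (snd y) (snd ` C))"
      by (auto intro!: card_mono simp: fC)
    moreover have "card (insert (fst y) (fst ` C)) \<le> card (fst ` C) + 1"
         "card (insert (snd y) (snd ` C)) \<le> card (snd ` C) + 1"
      using fC by (auto simp: card_insert_if)
    ultimately show ?thesis unfolding s_of_def p1_def p2_def C_def[symmetric] C'_def[symmetric]
      by linarith
  next
    case True
    obtain w where w: "{z \<in> Fr. nn z y \<and> z \<noteq> x} \<subseteq> {w}" "fst w = fst y \<or> snd w = snd y"
    proof (cases "{z \<in> Fr. nn z y \<and> z \<noteq> x} = {}")
      case True
      have "{z \<in> Fr. nn z y \<and> z \<noteq> x} \<subseteq> {y}" using True by blast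
      thus ?thesis using that[of y] by blast
    next
      case False
      then obtain w where "w \<in> Fr" "nn w y" by auto
      thus ?thesis using that[of w] uniq nn_share by blast
    qed
    hence "C' \<subseteq> insert y (insert w C)" using incl by blast
    hence "fst ` C' \<subseteq> insert (fst y) (insert (fst w) (fst ` C))"
          "snd ` C' \<subseteq> insert (snd y) (insert (snd w) (snd ` C))" by auto
    hence "card (fst ` C') \<le> card (insert (fst y) (insert (fst w) (fst ` C)))"
          "card (snd ` C') \<le> card (insert (snd y) (insert (snd w) (snd ` C)))"
      by (auto intro!: card_mono simp: fC)
    moreover have "fst y \<in> fst ` C \<or> snd y \<in> snd ` C"
      using nn_share[OF nxy] True by (metis image_eqI)
    ultimately show ?thesis unfolding s_of_def p1_def p2_def C_def[symmetric] C'_def[symmetric]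
      using card_aux[of "fst ` C" "snd ` C" "fst y" "snd y" "fst w" "snd w"] fC w(2) by force
  qed
qed

lemma swap_sym: "swap_sites x y S = swap_sites y x S"
  unfolding swap_sites_def by auto

lemma free_two:
  assumes mv: "move L A E" and ds: "int (s_of L E) - int (s_of L A) \<ge> 3"
  shows "card A \<ge> card (eta_cl L A) + 2"
proof (rule ccontr)
  assume small: "\<not> ?thesis"
  have fin: "finite A" using mv finite_Lam unfolding move_def config_def by (auto intro: finite_subset)
  have "s_of L E \<le> s_of L A + 2"
  proof -
    consider (sw) x y where "x \<in> Lam L" "y \<in> Lam L" "nn x y" "E = swap_sites x y A"
      | (rm) x where "x \<in> bdry L" "E = A - {x}"
      | (ins) x where "x \<in> bdry L" "E = insert x A"
      using mv unfolding move_def by blast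
    thus ?thesis
    proof cases
      case rm thus ?thesis using s_mono[of E A L] by auto
    next
      case ins
      hence "x \<notin> Lam0 L" unfolding Lam0_def by auto
      hence "eta_cl L E = eta_cl L A" unfolding ins(2) eta_cl_def by auto
      thus ?thesis unfolding s_of_def p1_def p2_def by simp
    next
      case sw
      have ne: "E \<noteq> A" using mv unfolding move_def by auto
      have xy: "x \<noteq> y" using nn_ne[OF sw(3)] .
      have nnyx: "nn y x" using sw(3) unfolding nn_def by arith
      consider "x \<in> A" "y \<notin> A" | "y \<in> A" "x \<notin> A" | "(x \<in> A) = (y \<in> A)" by blast
      thus ?thesis
      proof cases
        case 1
        have "E = insert y (A - {x})" unfolding sw(4) swap_sites_def using 1 xy by auto
        thus ?thesis using swap_case[OF fin 1(1) 1(2) sw(3)] small by simp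
      next
        case 2
        have "E = insert x (A - {y})" unfolding sw(4) swap_sites_def using 2 xy by auto
        thus ?thesis using swap_case[OF fin 2(1) 2(2) nnyx] small by simp
      next
        case 3
        have "E = A" unfolding sw(4) swap_sites_def using 3 xy by auto
        thus ?thesis using ne by simp
      qed
    qed
  qed
  thus False using ds by simp
qed



lemma arith_main:
  fixes U1 U2 e l a b c :: real
  assumes U2: "U2 > 0" and U1: "U1 > 2*U2" and e0: "e > 0" and eU: "e < U2"
    and l1: "e*l > U2" and l2: "e*(l-1) < U2" and a0: "a \<ge> 0" and bl: "b \<ge> l" and cab: "c \<le> a*b"
    and cs: "(a+b \<le> 3*l-3) \<or> (a+b = 3*l-2) \<or> (b = l \<and> a+b \<ge> 3*l-1 \<and> a*b - c \<ge> a - 1)"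
  shows "U1*b + U2*a - e*c + 2*(U1+U2-e) > U1*l + 2*U2*l + U1 - U2 - 2*e*l^2 + 3*e*l - 2*e"
proof -
  have ec: "e*c \<le> e*(a*b)" using cab e0 by simp
  from cs consider "a+b \<le> 3*l-3" | "a+b = 3*l-2" | "b = l" "a+b \<ge> 3*l-1" "a*b - c \<ge> a - 1" by blast
  thus ?thesis
  proof cases
    case 1
    have "e*l \<le> e*b" using bl e0 by (simp add: mult_left_mono)
    hence eb: "e*b - U2 > 0" using l1 by linarith
    have s1: "(3*l-3-b-a)*(e*b-U2) \<ge> 0" using 1 eb by (intro mult_nonneg_nonneg) auto
    have s2: "(b-l)*(U1 - U2 - e*l + 3*e + e*(b-l)) \<ge> 0"
    proof -
      have "e*(b-l) \<ge> 0" using bl e0 by simp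
      moreover have "e*l < U2 + e" using l2 by (simp add: algebra_simps)
      ultimately have "U1 - U2 - e*l + 3*e + e*(b-l) > 0" using U1 e0 by linarith
      thus ?thesis using bl by simp
    qed
    have id: "U1*b + (3*l-3-b)*(U2-e*b) = U1*l + (2*l-3)*(U2-e*l) + (b-l)*(U1 - U2 - e*l + 3*e + e*(b-l))"
      by (simp add: algebra_simps)
    have id2: "U1*l + (2*l-3)*(U2-e*l) + 2*(U1+U2-e) = U1*l + 2*U2*l + U1 - U2 - 2*e*l^2 + 3*e*l - 2*e + U1"
      by (simp add: algebra_simps power2_eq_square)
    have "U1*b + U2*a - e*(a*b) = U1*b + (3*l-3-b)*(U2-e*b) + (3*l-3-b-a)*(e*b-U2)"
      by (simp add: algebra_simps)
    thus ?thesis using s1 s2 id id2 ec U1 U2 by linarith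
  next
    case 2
    have aa: "a = 3*l-2-b" using 2 by simp
    have s2: "(b-l)*(U1 - U2 - e*l + 2*e + e*(b-l)) \<ge> 0"
    proof -
      have "e*(b-l) \<ge> 0" using bl e0 by simp
      moreover have "e*l < U2 + e" using l2 by (simp add: algebra_simps)
      ultimately have "U1 - U2 - e*l + 2*e + e*(b-l) > 0" using U1 e0 by linarith
      thus ?thesis using bl by simp
    qed
    have id: "U1*b + U2*a - e*(a*b) = U1*l + (2*l-2)*(U2-e*l) + (b-l)*(U1 - U2 - e*l + 2*e + e*(b-l))"
      unfolding aa by (simp add: algebra_simps)
    have id2: "U1*l + (2*l-2)*(U2-e*l) + 2*(U1+U2-e) = U1*l + 2*U2*l + U1 - U2 - 2*e*l^2 + 3*e*l - 2*e + U1 + U2 - e*l"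
      by (simp add: algebra_simps power2_eq_square)
    have "e*l < U2 + e" using l2 by (simp add: algebra_simps)
    thus ?thesis using s2 id id2 ec U1 U2 eU by linarith
  next
    case 3
    have ec2: "e*c \<le> e*(a*l - a + 1)" using 3 e0 by (simp add: mult_left_mono)
    have pos: "U2 - e*(l-1) > 0" using l2 by simp
    have "a \<ge> 2*l-1" using 3 by simp
    hence s: "(a - (2*l-1))*(U2 - e*(l-1)) \<ge> 0" using pos by simp
    have id: "U1*b + U2*a - e*(a*l - a + 1) = U1*l + (2*l-1)*(U2 - e*(l-1)) - e + (a - (2*l-1))*(U2 - e*(l-1))"
      using 3 by (simp add: algebra_simps)
    have id2: "U1*l + (2*l-1)*(U2 - e*(l-1)) - e + 2*(U1+U2-e) = U1*l + 2*U2*l + U1 - U2 - 2*e*l^2 + 3*e*l - 2*e + U1 + 2*U2 - 2*e"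
      by (simp add: algebra_simps power2_eq_square)
    show ?thesis using s id id2 ec2 U1 U2 eU by linarith
  qed
qed



theorem proposition4p3:
  fixes U1 U2 :: real
  assumes "U2 > 0" and "U1 > 2 * U2"
  shows "\<exists>\<epsilon>0 > 0. \<forall>\<Delta> (L::nat) \<eta>b \<eta>.
           \<Delta> > 0 \<and> 0 < eps U1 U2 \<Delta> \<and> eps U1 U2 \<Delta> < \<epsilon>0
           \<and> U2 / eps U1 U2 \<Delta> \<notin> \<nat>
           \<and> move L \<eta>b \<eta> \<and> inB L U1 U2 \<Delta> \<eta>b
           \<and> int (s_of L \<eta>) - int (s_of L \<eta>b) \<ge> 3
           \<and> pmin L \<eta> \<ge> 4
           \<and> int (p2 L \<eta>b) \<ge> ell2 U1 U2 \<Delta>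
           \<longrightarrow> inB L U1 U2 \<Delta> \<eta> \<or> (\<not> inB L U1 U2 \<Delta> \<eta> \<and> H L U1 U2 \<Delta> \<eta>b > Gamma U1 U2 \<Delta>)"
proof (intro exI[of _ U2] conjI allI impI)
  show "U2 > 0" by fact
  fix \<Delta> :: real and L :: nat and A E :: "site set"
  assume h: "\<Delta> > 0 \<and> 0 < eps U1 U2 \<Delta> \<and> eps U1 U2 \<Delta> < U2
           \<and> U2 / eps U1 U2 \<Delta> \<notin> \<nat>
           \<and> move L A E \<and> inB L U1 U2 \<Delta> A
           \<and> int (s_of L E) - int (s_of L A) \<ge> 3
           \<and> pmin L E \<ge> 4
           \<and> int (p2 L A) \<ge> ell2 U1 U2 \<Delta>"
  define e where "e = eps U1 U2 \<Delta>"
  define li where "li = ell2 U1 U2 \<Delta>"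
  define l where "l = real_of_int li"
  have e0: "e > 0" and eU: "e < U2" and nN: "U2 / e \<notin> \<nat>" using h unfolding e_def by auto
  have De: "\<Delta> = U1 + U2 - e" unfolding e_def eps_def by simp
  have lic: "li = \<lceil>U2 / e\<rceil>" unfolding li_def ell2_def e_def ..
  have "U2 / e \<le> l" unfolding l_def lic by (rule le_of_int_ceiling)
  moreover have "U2 / e \<noteq> l"
  proof
    assume eq: "U2 / e = l"
    have "U2 / e > 0" using e0 assms(1) by simp
    hence "li \<ge> 0" using eq unfolding l_def by simp
    hence "l = real (nat li)" unfolding l_def by simp
    hence "U2 / e \<in> \<nat>" using eq by simp
    thus False using nN by simp
  qed
  ultimately have "U2 / e < l" by simp
  hence l1: "e*l > U2" using e0 by (simp add: field_simps)
  have "l - 1 < U2 / e" unfolding l_def lic by (meson ceiling_correct less_ceiling_iff)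
  hence l2: "e*(l-1) < U2" using e0 by (simp add: field_simps)
  define a where "a = real (p1 L A)"
  define b where "b = real (p2 L A)"
  define c where "c = real (card (eta_cl L A))"
  have bl: "b \<ge> l" using h unfolding b_def l_def li_def by simp
  have cab: "c \<le> a*b" unfolding a_def b_def c_def using card_cl_le[of L A]
    by (metis of_nat_le_iff of_nat_mult)
  have two: "card A \<ge> card (eta_cl L A) + 2" using free_two h by blast
  have hb: "real (hbonds L A) \<le> c - b" using hb_bound[of L A] unfolding c_def b_def by simp
  have vb: "real (vbonds L A) \<le> c - a" using vb_bound[of L A] unfolding c_def a_def by simp
  have n2: "real (card A) \<ge> c + 2" using two unfolding c_def by simp
  have "H L U1 U2 \<Delta> A = - U1 * real (hbonds L A) - U2 * real (vbonds L A) + \<Delta> * real (card A)"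
    unfolding H_def ..
  also have "\<dots> \<ge> - U1 * (c - b) - U2 * (c - a) + \<Delta> * (c + 2)"
  proof -
    have "U1 * real (hbonds L A) \<le> U1 * (c - b)" using hb assms by (intro mult_left_mono) auto
    moreover have "U2 * real (vbonds L A) \<le> U2 * (c - a)" using vb assms by (intro mult_left_mono) auto
    moreover have "\<Delta> * (c + 2) \<le> \<Delta> * real (card A)" using n2 h by (intro mult_left_mono) auto
    ultimately show ?thesis by linarith
  qed
  finally have Hge: "H L U1 U2 \<Delta> A \<ge> U1*b + U2*a - e*c + 2*(U1+U2-e)"
    unfolding De by (simp add: algebra_simps)
  have inB: "inB L U1 U2 \<Delta> A" using h by blast
  have cs: "(a+b \<le> 3*l-3) \<or> (a+b = 3*l-2) \<or> (b = l \<and> a+b \<ge> 3*l-1 \<and> a*b - c \<ge> a - 1)"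
  proof -
    have sa: "int (s_of L A) = int (p1 L A) + int (p2 L A)" unfolding s_of_def by simp
    have ss: "sstar U1 U2 \<Delta> = 3*li - 1" unfolding sstar_def li_def ..
    have v: "v_of L A = int (p1 L A) * int (p2 L A) - int (card (eta_cl L A))" unfolding v_of_def ..
    have pm: "int (pmax L A) \<ge> int (p1 L A)" unfolding pmax_def by simp
    have p2l: "int (p2 L A) \<ge> li" using h unfolding li_def by simp
    from inB p2l consider "int (p1 L A) + int (p2 L A) \<le> 3*li - 3" | "int (p1 L A) + int (p2 L A) = 3*li - 2"
       | "int (p2 L A) = li" "int (p1 L A) + int (p2 L A) \<ge> 3*li - 1"
          "int (p1 L A) * int (p2 L A) - int (card (eta_cl L A)) \<ge> int (p1 L A) - 1"
      unfolding inB_def Let_def sa ss li_def[symmetric] v[symmetric] using pm by fastforce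
    thus ?thesis
    proof cases
      case 1
      hence "real_of_int (int (p1 L A) + int (p2 L A)) \<le> real_of_int (3*li - 3)" by (simp only: of_int_le_iff)
      hence "a+b \<le> 3*l-3" unfolding a_def b_def l_def by simp
      thus ?thesis by blast
    next
      case 2
      hence "real_of_int (int (p1 L A) + int (p2 L A)) = real_of_int (3*li - 2)" by (simp only: of_int_eq_iff)
      hence "a+b = 3*l-2" unfolding a_def b_def l_def by simp
      thus ?thesis by blast
    next
      case 3
      have x1: "real_of_int (int (p2 L A)) = real_of_int li" using 3(1) by (simp only: of_int_eq_iff)
      have x2: "real_of_int (int (p1 L A) + int (p2 L A)) \<ge> real_of_int (3*li - 1)" using 3(2) by (simp only: of_int_le_iff)
      have x3: "real_of_int (int (p1 L A) * int (p2 L A) - int (card (eta_cl L A))) \<ge> real_of_int (int (p1 L A) - 1)"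
        using 3(3) by (simp only: of_int_le_iff)
      have "b = l" "a+b \<ge> 3*l-1" "a*b - c \<ge> a - 1"
        using x1 x2 x3 unfolding a_def b_def c_def l_def by simp_all
      thus ?thesis by blast
    qed
  qed
  have "U1*b + U2*a - e*c + 2*(U1+U2-e) > U1*l + 2*U2*l + U1 - U2 - 2*e*l^2 + 3*e*l - 2*e"
    using arith_main[OF assms(1) assms(2) e0 eU l1 l2 _ bl cab cs] unfolding a_def by simp
  moreover have "Gamma U1 U2 \<Delta> = U1*l + 2*U2*l + U1 - U2 - 2*e*l^2 + 3*e*l - 2*e"
    unfolding Gamma_def Let_def e_def l_def li_def by (simp add: algebra_simps)
  ultimately have "H L U1 U2 \<Delta> A > Gamma U1 U2 \<Delta>" using Hge by linarith
  thus "inB L U1 U2 \<Delta> E \<or> (\<not> inB L U1 U2 \<Delta> E \<and> H L U1 U2 \<Delta> A > Gamma U1 U2 \<Delta>)" by blast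
qed


end
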